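(* Let $X$ be a real Hilbert space, $f:X\to\mathbb{R}\cup\{+\infty\}$ a proper $\Phi_{lsc}$-convex function and $\bar x\in\mathrm{dom}(f)$. Then $\partial_{lsc}f(\bar x)\neq\emptyset$ if and only if $\partial_P f(\bar x)\ne\emptyset$.
   Context: $\Phi_{lsc}$ is the class of functions $\varphi(x)=-a\|x\|^2+\langle v,x\rangle+c$ ($a\ge0$, $v\in X^*$, $c\in\mathbb{R}$); $f$ is $\Phi_{lsc}$-convex if it is the pointwise supremum of the $\varphi\in\Phi_{lsc}$ with $\varphi\le f$; proper means at least one such $\varphi$ exists and $\mathrm{dom}(f)=\{x:f(x)<+\infty\}\ne\emptyset$. $\partial_{lsc}f(\bar x)$ is the set of $(a,v)\in\mathbb{R}_+\times X^*$ with $f(x)-f(\bar x)\ge\langle v,x-\bar x\rangle-a\|x\|^2+a\|\bar x\|^2$ for all $x\in X$. The proximal subdifferential $\partial_Pf(\bar x)$ is the set of $v\in X^*$ for which there exist $\delta>0$ and $\rho\ge0$ with $f(x)\ge f(\bar x)+\langle v,x-\bar x\rangle-\tfrac12\rho\|x-\bar x\|^2$ for all $x$ with $\|x-\bar x\|<\delta$. *)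

theory Defs
  imports "HOL-Analysis.Analysis"
begin

text \<open>Functions of the class Phi_lsc: x \<mapsto> -a\<parallel>x\<parallel>^2 + \<langle>v,x\<rangle> + c.
  In a real Hilbert space the dual X* is identified with X via the inner product (Riesz).\<close>
definition phi_lsc :: "real \<Rightarrow> 'a::real_inner \<Rightarrow> real \<Rightarrow> 'a \<Rightarrow> real" where
  "phi_lsc a v c x = - a * (norm x)^2 + inner v x + c"

definition lsc_minorants :: "('a::real_inner \<Rightarrow> ereal) \<Rightarrow> (real \<times> 'a \<times> real) set" where
  "lsc_minorants f = {(a, v, c). a \<ge> 0 \<and> (\<forall>y. ereal (phi_lsc a v c y) \<le> f y)}"

definition phi_lsc_convex :: "('a::real_inner \<Rightarrow> ereal) \<Rightarrow> bool" where
  "phi_lsc_convex f \<longleftrightarrow>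
     (\<forall>x. f x = (SUP p\<in>lsc_minorants f. ereal (phi_lsc (fst p) (fst (snd p)) (snd (snd p)) x)))"

definition dom_f :: "('a \<Rightarrow> ereal) \<Rightarrow> 'a set" where
  "dom_f f = {x. f x < \<infinity>}"

definition proper_lsc :: "('a::real_inner \<Rightarrow> ereal) \<Rightarrow> bool" where
  "proper_lsc f \<longleftrightarrow> lsc_minorants f \<noteq> {} \<and> dom_f f \<noteq> {}"

definition subdiff_lsc :: "('a::real_inner \<Rightarrow> ereal) \<Rightarrow> 'a \<Rightarrow> (real \<times> 'a) set" where
  "subdiff_lsc f xb = {(a, v). a \<ge> 0 \<and>
     (\<forall>x. f x \<ge> f xb + ereal (inner v (x - xb) - a * (norm x)^2 + a * (norm xb)^2))}"

definition subdiff_prox :: "('a::real_inner \<Rightarrow> ereal) \<Rightarrow> 'a \<Rightarrow> 'a set" where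
  "subdiff_prox f xb = {v. \<exists>\<delta>>0. \<exists>\<rho>\<ge>0. \<forall>x. norm (x - xb) < \<delta> \<longrightarrow>
      f x \<ge> f xb + ereal (inner v (x - xb) - (1/2) * \<rho> * (norm (x - xb))^2)}"

end

theory Submission
  imports Defs
begin

lemma sq_ident:
  fixes x xb v :: "'a::real_inner" and a :: real
  shows "inner v (x - xb) - a * (norm x)^2 + a * (norm xb)^2
       = inner (v - (2 * a) *\<^sub>R xb) (x - xb) - (1/2) * (2*a) * (norm (x - xb))^2"
  by (simp add: power2_norm_eq_inner inner_diff_left inner_diff_right inner_commute algebra_simps)

lemma sq_ident2:
  fixes x xb v :: "'a::real_inner" and a :: real
  shows "inner v (x - xb) - a * (norm (x - xb))^2
       = inner (v + (2 * a) *\<^sub>R xb) (x - xb) - a * (norm x)^2 + a * (norm xb)^2"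
  by (simp add: power2_norm_eq_inner inner_diff_left inner_diff_right inner_commute algebra_simps)

lemma real_key:
  fixes t d a a0 B K :: real
  assumes "0 < d" "d \<le> t" "0 \<le> a0" "0 \<le> B" "a \<ge> 2*a0 + B/d + \<bar>K\<bar>/d^2"
  shows "a * t^2 \<ge> 2*a0*t^2 + B*t + K"
proof -
  define s where "s = t / d"
  have s1: "s \<ge> 1" using assms by (simp add: s_def)
  have t: "t = s * d" using assms by (simp add: s_def)
  have "B/d * t^2 = B * t * s" using assms by (simp add: t power2_eq_square)
  also have "\<dots> \<ge> B * t"
  proof -
    have "B * t \<ge> 0" using assms by simp
    then show ?thesis using s1 by (simp add: mult_le_cancel_left1)
  qed
  finally have h1: "B/d * t^2 \<ge> B*t" .
  have "\<bar>K\<bar>/d^2 * t^2 = \<bar>K\<bar> * s^2" using assms by (simp add: t power2_eq_square)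
  also have "\<dots> \<ge> \<bar>K\<bar>" using s1
    by (metis abs_ge_zero mult_le_cancel_left1 one_le_power power2_eq_square not_less)
  finally have h2: "\<bar>K\<bar>/d^2 * t^2 \<ge> K" by linarith
  have "a * t^2 \<ge> (2*a0 + B/d + \<bar>K\<bar>/d^2) * t^2"
    using assms(5) by (simp add: mult_right_mono)
  then show ?thesis using h1 h2 by (simp add: algebra_simps)
qed

theorem mainTheorem8:
  fixes f :: "'a::{real_inner, complete_space} \<Rightarrow> ereal" and xb :: 'a
  assumes "proper_lsc f" and "phi_lsc_convex f" and "xb \<in> dom_f f"
  shows "subdiff_lsc f xb \<noteq> {} \<longleftrightarrow> subdiff_prox f xb \<noteq> {}"
proof
  assume "subdiff_lsc f xb \<noteq> {}"
  then obtain a v where av: "a \<ge> 0"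
    "\<And>x. f x \<ge> f xb + ereal (inner v (x - xb) - a * (norm x)^2 + a * (norm xb)^2)"
    unfolding subdiff_lsc_def by auto
  have "v - (2 * a) *\<^sub>R xb \<in> subdiff_prox f xb"
    unfolding subdiff_prox_def mem_Collect_eq
  proof (rule exI[of _ 1], rule conjI, simp, rule exI[of _ "2*a"], rule conjI, use av in simp, intro allI impI)
    fix x show "f xb + ereal (inner (v - (2 * a) *\<^sub>R xb) (x - xb) - (1/2) * (2*a) * (norm (x - xb))^2) \<le> f x"
      using av(2)[of x] by (simp only: sq_ident)
  qed
  then show "subdiff_prox f xb \<noteq> {}" by blast
next
  assume "subdiff_prox f xb \<noteq> {}"
  then obtain v d \<rho> where d: "d > 0" "\<rho> \<ge> 0" and
    loc: "\<And>x. norm (x - xb) < d \<Longrightarrow>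
      f x \<ge> f xb + ereal (inner v (x - xb) - (1/2) * \<rho> * (norm (x - xb))^2)"
    unfolding subdiff_prox_def by auto
  obtain a0 v0 c0 where a0: "a0 \<ge> 0" and mino: "\<And>y. ereal (phi_lsc a0 v0 c0 y) \<le> f y"
    using assms(1) unfolding proper_lsc_def lsc_minorants_def by auto
  have "f xb < \<infinity>" using assms(3) by (simp add: dom_f_def)
  moreover have "f xb > -\<infinity>" using mino[of xb] by (metis MInfty_neq_ereal(1) ereal_infty_less(2) order_less_le_trans)
  ultimately obtain F where F: "f xb = ereal F" by (cases "f xb") auto
  define B where "B = norm v0 + norm v"
  define K where "K = F + 2*a0*(norm xb)^2 + norm v0 * norm xb - c0"
  define a where "a = \<rho>/2 + 2*a0 + B/d + \<bar>K\<bar>/d^2"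
  have B0: "B \<ge> 0" by (simp add: B_def)
  have aa: "a \<ge> \<rho>/2" using a0 B0 d by (simp add: a_def)
  have a_nn: "a \<ge> 0" using aa d by simp
  have main: "ereal (F + (inner v (x - xb) - a * (norm (x - xb))^2)) \<le> f x" for x
  proof (cases "norm (x - xb) < d")
    case True
    have "(1/2) * \<rho> * (norm (x - xb))^2 \<le> a * (norm (x - xb))^2"
      using mult_right_mono[OF aa, of "(norm (x - xb))^2"] by simp
    then have "ereal (F + (inner v (x - xb) - a * (norm (x - xb))^2))
        \<le> ereal (F + (inner v (x - xb) - (1/2) * \<rho> * (norm (x - xb))^2))" by simp
    also have "\<dots> \<le> f x" using loc[OF True] F by simp
    finally show ?thesis .
  next
    case False
    define t where "t = norm (x - xb)"
    have td: "d \<le> t" using False by (simp add: t_def)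
    have nx: "norm x \<le> norm xb + t" using norm_triangle_ineq[of xb "x - xb"] by (simp add: t_def)
    have nx2: "(norm x)^2 \<le> 2*(norm xb)^2 + 2*t^2"
    proof -
      have "(norm x)^2 \<le> (norm xb + t)^2" using nx by (simp add: power_mono)
      also have "\<dots> \<le> 2*(norm xb)^2 + 2*t^2" using sum_squares_ge_zero
        by (smt (verit) power2_diff power2_sum zero_le_power2)
      finally show ?thesis .
    qed
    have i0: "inner v0 x \<ge> - (norm v0 * (norm xb + t))"
    proof -
      have "\<bar>inner v0 x\<bar> \<le> norm v0 * norm x" by (rule Cauchy_Schwarz_ineq2)
      also have "\<dots> \<le> norm v0 * (norm xb + t)" using nx by (simp add: mult_left_mono)
      finally show ?thesis by linarith
    qed
    have i1: "inner v (x - xb) \<le> norm v * t"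
      using Cauchy_Schwarz_ineq2[of v "x - xb"] by (simp add: t_def)
    have key: "a * t^2 \<ge> 2*a0*t^2 + B*t + K"
    proof -
      have "a - \<rho>/2 \<ge> 2*a0 + B/d + \<bar>K\<bar>/d^2" by (simp add: a_def)
      from real_key[OF d(1) td a0 B0 this] have "(a - \<rho>/2) * t^2 \<ge> 2*a0*t^2 + B*t + K" .
      moreover have "\<rho>/2 * t^2 \<ge> 0" using d by simp
      ultimately show ?thesis by (simp add: algebra_simps)
    qed
    have "a0 * (norm x)^2 \<le> a0 * (2*(norm xb)^2 + 2*t^2)" using nx2 a0 by (simp add: mult_left_mono)
    then have "F + (inner v (x - xb) - a * t^2) \<le> phi_lsc a0 v0 c0 x"
      using key i0 i1 unfolding phi_lsc_def B_def K_def by (simp add: algebra_simps)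
    then have "ereal (F + (inner v (x - xb) - a * t^2)) \<le> ereal (phi_lsc a0 v0 c0 x)" by simp
    also have "\<dots> \<le> f x" by (rule mino)
    finally show ?thesis by (simp add: t_def)
  qed
  have "(a, v + (2 * a) *\<^sub>R xb) \<in> subdiff_lsc f xb"
    unfolding subdiff_lsc_def
  proof (simp add: a_nn, intro allI)
    fix x
    show "f xb + ereal (inner (v + (2 * a) *\<^sub>R xb) (x - xb) - a * (norm x)^2 + a * (norm xb)^2) \<le> f x"
      using main[of x] F by (simp add: sq_ident2[symmetric])
  qed
  then show "subdiff_lsc f xb \<noteq> {}" by blast
qed

end
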